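(* Let $p\ge3$ and $k\ge1$ be integers, $Q=2^{p-1}$, and for $1\le j\le k$ let $g_j(\alpha)=j\alpha^{p-1}-(k-j+1)-(j-1)(1+\alpha)^{p-1}$. Then for every integer $j$ with $k^{\frac1{p-1}}+1\le j\le k$ we have $g_j\big(Q(j-1)\big)>0$. Consequently the smallest positive root $a_j$ of $g_j$ satisfies $a_j<2^{p-1}(j-1)$ for such $j$. *)

theory Defs
  imports Complex_Main
begin

definition gfun :: "nat \<Rightarrow> nat \<Rightarrow> nat \<Rightarrow> real \<Rightarrow> real" where
  "gfun p k j \<alpha> = real j * \<alpha> ^ (p - 1) - (real k - real j + 1) - (real j - 1) * (1 + \<alpha>) ^ (p - 1)"

definition is_smallest_pos_root :: "(real \<Rightarrow> real) \<Rightarrow> real \<Rightarrow> bool" where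
  "is_smallest_pos_root f a \<longleftrightarrow> a > 0 \<and> f a = 0 \<and> (\<forall>b. b > 0 \<and> f b = 0 \<longrightarrow> a \<le> b)"

end

theory Submission
  imports Defs
begin

lemma binom_bound:
  fixes x :: real
  assumes "x \<ge> 1"
  shows "(1+x)^(Suc m) \<le> x^(Suc m) + (2^(Suc m) - 1) * x^m"
proof (induction m)
  case 0 then show ?case by simp
next
  case (Suc m)
  have xm: "x^m \<le> x^(Suc m)" using assms by (simp add: power_increasing)
  have "(1+x)^(Suc (Suc m)) = (1+x) * (1+x)^(Suc m)" by simp
  also have "\<dots> \<le> (1+x) * (x^(Suc m) + (2^(Suc m) - 1) * x^m)"
    using Suc assms by (intro mult_left_mono) auto
  also have "\<dots> = x^(Suc (Suc m)) + x^(Suc m) + (2^(Suc m) - 1) * x^(Suc m) + (2^(Suc m) - 1) * x^m"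
    by (simp add: algebra_simps)
  also have "\<dots> \<le> x^(Suc (Suc m)) + x^(Suc m) + (2^(Suc m) - 1) * x^(Suc m) + (2^(Suc m) - 1) * x^(Suc m)"
  proof -
    have "(1::real) \<le> 2^(Suc m)" by (rule one_le_power) simp
    hence "(2::real)^(Suc m) - 1 \<ge> 0" by simp
    then have "(2^(Suc m) - 1) * x^m \<le> (2^(Suc m) - 1) * x^(Suc m)" using xm by (intro mult_left_mono)
    then show ?thesis by linarith
  qed
  also have "\<dots> = x^(Suc (Suc m)) + (2^(Suc (Suc m)) - 1) * x^(Suc m)"
    by (simp add: algebra_simps)
  finally show ?case .
qed

theorem mainTheorem8:
  fixes p k j :: nat
  assumes "p \<ge> 3" and "k \<ge> 1"
    and "root (p - 1) (real k) + 1 \<le> real j" and "j \<le> k"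
  shows "gfun p k j (2 ^ (p - 1) * (real j - 1)) > 0
         \<and> (\<exists>a. is_smallest_pos_root (gfun p k j) a)
         \<and> (\<forall>a. is_smallest_pos_root (gfun p k j) a \<longrightarrow> a < 2 ^ (p - 1) * (real j - 1))"
proof -
  define n where "n = p - 1"
  obtain m where nm: "n = Suc m" and m1: "m \<ge> 1" 
  proof -
    have "n = Suc (p - 2)" "p - 2 \<ge> 1" using assms(1) unfolding n_def by auto
    then show ?thesis using that by blast
  qed
  define y where "y = real j - 1"
  define x where "x = 2^n * y"
  have npos: "n > 0" using nm by simp
  have rt: "root n (real k) \<le> y" using assms(3) unfolding y_def n_def by simp
  have r1: "1 \<le> root n (real k)" using assms(2) npos by (simp add: real_root_ge_1_iff)
  have y1: "y \<ge> 1" using rt r1 by simp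
  have ky: "real k \<le> y^n"
  proof -
    have "(root n (real k))^n \<le> y^n" using rt r1 by (intro power_mono) auto
    then show ?thesis using npos by (simp add: real_root_pow_pos2)
  qed
  have x1: "x \<ge> 1" 
  proof -
    have "(1::real) \<le> 2^n" by simp
    then show ?thesis unfolding x_def using y1 by (metis mult_mono' mult_1 zero_le_one)
  qed
  have gx: "gfun p k j x = (y+1) * x^n - (real k - real j + 1) - y * (1+x)^n"
    unfolding gfun_def n_def y_def by simp
  have b: "(1+x)^n \<le> x^n + (2^n - 1) * x^m" using binom_bound[OF x1] nm by simp
  have "y * (1+x)^n \<le> y * (x^n + (2^n - 1) * x^m)" using b y1 by (intro mult_left_mono) auto
  hence "gfun p k j x \<ge> (y+1) * x^n - (real k - real j + 1) - y * (x^n + (2^n - 1) * x^m)"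
    using gx by simp
  also have "(y+1) * x^n - (real k - real j + 1) - y * (x^n + (2^n - 1) * x^m)
      = x * x^m - y * (2^n - 1) * x^m - (real k - real j + 1)"
    using nm by (simp add: algebra_simps)
  also have "\<dots> = y * x^m - (real k - real j + 1)" unfolding x_def by (simp add: algebra_simps)
  also have "y * x^m = 2^(n*m) * y^n" unfolding x_def using nm
    by (simp add: power_mult_distrib power_mult[symmetric] power_add[symmetric] algebra_simps)
  finally have g1: "gfun p k j x \<ge> 2^(n*m) * y^n - (real k - real j + 1)" .
  have "2^(n*m) * y^n \<ge> y^n" using y1 by simp
  moreover have "real j \<ge> 2" using y1 unfolding y_def by simp
  ultimately have gpos: "gfun p k j x > 0" using g1 ky by linarith
  have xdef: "2 ^ (p - 1) * (real j - 1) = x" unfolding x_def y_def n_def by simp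
  have cont: "continuous_on UNIV (gfun p k j)" unfolding gfun_def by (intro continuous_intros)
  have g0: "gfun p k j 0 < 0" unfolding gfun_def using assms(4) \<open>real j \<ge> 2\<close> assms(1) by (simp add: power_0_left)
  define T where "T = {b \<in> {0..x}. gfun p k j b = 0}"
  have Tc: "compact T"
  proof -
    have "closed {b. gfun p k j b = (\<lambda>_. 0) b}"
      by (rule closed_Collect_eq[OF cont]) (rule continuous_on_const)
    moreover have "T = {0..x} \<inter> {b. gfun p k j b = (\<lambda>_. 0) b}" unfolding T_def by auto
    ultimately show ?thesis by (simp add: compact_Int_closed compact_Icc)
  qed
  have Tne: "T \<noteq> {}"
  proof -
    have "\<exists>c\<ge>0. c \<le> x \<and> gfun p k j c = 0"
      using IVT[of "gfun p k j" 0 0 x] g0 gpos x1 cont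
      by (auto intro: continuous_on_subset simp: continuous_on_eq_continuous_at)
    then show ?thesis unfolding T_def by auto
  qed
  obtain a0 where a0T: "a0 \<in> T" and a0min: "\<forall>b\<in>T. a0 \<le> b"
    using compact_attains_inf[OF Tc Tne] by auto
  have a0pos: "a0 > 0" using a0T g0 unfolding T_def by (cases "a0 = 0") auto
  have a0lt: "a0 < x" using a0T gpos unfolding T_def by (cases "a0 = x") auto
  have sm: "is_smallest_pos_root (gfun p k j) a0"
    unfolding is_smallest_pos_root_def
  proof (intro conjI allI impI)
    show "gfun p k j a0 = 0" using a0T unfolding T_def by auto
    fix b assume "0 < b \<and> gfun p k j b = 0"
    then show "a0 \<le> b" using a0min a0lt unfolding T_def
      by (cases "b \<le> x") auto
  qed (rule a0pos)
  have "\<forall>a. is_smallest_pos_root (gfun p k j) a \<longrightarrow> a < x"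
  proof (intro allI impI)
    fix a assume "is_smallest_pos_root (gfun p k j) a"
    then have "a \<le> a0" using sm unfolding is_smallest_pos_root_def by auto
    then show "a < x" using a0lt by simp
  qed
  then show ?thesis using gpos sm xdef by auto
qed

end
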